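(* Let $f:(M,g_M)\to(N,g_N)$ be a smooth map between Riemannian manifolds. Then $f$ is a conformal Riemannian morphism if and only if there exist a smooth function $\wedge_f:M\to\mathbb{R}^{+}$ and, for each $x\in M$, a linear subspace $H_x\subset T_xM$ with $T_xM=H_x\oplus\ker(df_x)$, such that $P_{H_x}\circ P_{H_x}=\wedge_f(x)\,P_{H_x}$ for all $x\in M$.
   Context: A linear map $T:V\to W$ between real inner-product spaces is a geometric function if there exist a subspace $C\subset V$ with $V=\ker T\oplus C$ and $r>0$ with $\langle T u,T v\rangle=r\langle u,v\rangle$ for all $u,v\in C$ ($r$ is a conformality factor). A smooth $f:(M,g_M)\to(N,g_N)$ is a conformal Riemannian morphism if there is a smooth $\wedge_f:M\to\mathbb{R}^{+}$ such that each $df_x$ is a geometric function with conformality factor $\wedge_f(x)$. For a subspace $H_x\subset T_xM$ with $H_x\oplus\ker(df_x)=T_xM$, define the linear map $(df_{H_x})^{\diamond}:T_{f(x)}N\to T_xM$ by $(df_{H_x})^{\diamond}(X)=((df_x)|_{H_x})^{*}(X)$ if $X\in\mathrm{range}(df_x)$ and $(df_{H_x})^{\diamond}(X)=0$ if $X\in\mathrm{range}(df_x)^{\perp}$, where $((df_x)|_{H_x})^{*}$ is the adjoint of $(df_x)|_{H_x}:H_x\to\mathrm{range}(df_x)$ with respect to $g_M(x)$ and $g_N(f(x))$. Set $P_{H_x}=(df_{H_x})^{\diamond}\circ df_x:T_xM\to T_xM$. *)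

theory Defs
  imports "HOL-Analysis.Analysis"
begin

definition inner_product_form :: "('a::real_vector \<Rightarrow> 'a \<Rightarrow> real) \<Rightarrow> bool" where
  "inner_product_form g \<longleftrightarrow> bilinear g \<and> (\<forall>u v. g u v = g v u) \<and> (\<forall>v. v \<noteq> 0 \<longrightarrow> g v v > 0)"

definition ker :: "('a::real_vector \<Rightarrow> 'b::real_vector) \<Rightarrow> 'a set" where
  "ker T = {v. T v = 0}"

definition direct_sum_decomp :: "'a::real_vector set \<Rightarrow> 'a set \<Rightarrow> bool" where
  "direct_sum_decomp A B \<longleftrightarrow> subspace A \<and> subspace B \<and> A \<inter> B = {0}
     \<and> {a + b | a b. a \<in> A \<and> b \<in> B} = UNIV"

definition geometric_function ::
  "('a::real_vector \<Rightarrow> 'a \<Rightarrow> real) \<Rightarrow> ('b::real_vector \<Rightarrow> 'b \<Rightarrow> real) \<Rightarrow> ('a \<Rightarrow> 'b) \<Rightarrow> real \<Rightarrow> bool" where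
  "geometric_function gV gW T r \<longleftrightarrow> linear T \<and> r > 0 \<and>
     (\<exists>C. direct_sum_decomp (ker T) C \<and> (\<forall>u\<in>C. \<forall>v\<in>C. gW (T u) (T v) = r * gV u v))"

definition restr_adjoint ::
  "('a::real_vector \<Rightarrow> 'a \<Rightarrow> real) \<Rightarrow> ('b::real_vector \<Rightarrow> 'b \<Rightarrow> real) \<Rightarrow> ('a \<Rightarrow> 'b) \<Rightarrow> 'a set \<Rightarrow> 'b \<Rightarrow> 'a" where
  "restr_adjoint gV gW T H y = (THE h. h \<in> H \<and> (\<forall>v\<in>H. gV h v = gW y (T v)))"

text \<open>The map (dT_H)^diamond: equal to the restricted adjoint on range T and to 0 on
  the gW-orthogonal complement of range T, extended linearly (i.e. applied to the
  gW-orthogonal projection of X onto range T).\<close>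
definition diamond ::
  "('a::real_vector \<Rightarrow> 'a \<Rightarrow> real) \<Rightarrow> ('b::real_vector \<Rightarrow> 'b \<Rightarrow> real) \<Rightarrow> ('a \<Rightarrow> 'b) \<Rightarrow> 'a set \<Rightarrow> 'b \<Rightarrow> 'a" where
  "diamond gV gW T H X =
     restr_adjoint gV gW T H (THE X1. X1 \<in> range T \<and> (\<forall>w\<in>range T. gW (X - X1) w = 0))"

definition P_H ::
  "('a::real_vector \<Rightarrow> 'a \<Rightarrow> real) \<Rightarrow> ('b::real_vector \<Rightarrow> 'b \<Rightarrow> real) \<Rightarrow> ('a \<Rightarrow> 'b) \<Rightarrow> 'a set \<Rightarrow> 'a \<Rightarrow> 'a" where
  "P_H gV gW T H = diamond gV gW T H \<circ> T"

text \<open>Points of M: the set M; tangent spaces T_xM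
  modelled by the finite-dimensional space 'a with metric gM x; T_yN by 'b with
  metric gN y; df x is the differential at x; smooth is the smoothness predicate
  for real functions on M.\<close>
definition conformal_riemannian_morphism ::
  "(('m \<Rightarrow> real) \<Rightarrow> bool) \<Rightarrow> 'm set \<Rightarrow> ('m \<Rightarrow> 'a::real_vector \<Rightarrow> 'a \<Rightarrow> real) \<Rightarrow>
   ('n \<Rightarrow> 'b::real_vector \<Rightarrow> 'b \<Rightarrow> real) \<Rightarrow> ('m \<Rightarrow> 'n) \<Rightarrow> ('m \<Rightarrow> 'a \<Rightarrow> 'b) \<Rightarrow> bool" where
  "conformal_riemannian_morphism smooth M gM gN f df \<longleftrightarrow>
     (\<exists>\<Lambda>. smooth \<Lambda> \<and> (\<forall>x\<in>M. \<Lambda> x > 0) \<and>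
        (\<forall>x\<in>M. geometric_function (gM x) (gN (f x)) (df x) (\<Lambda> x)))"

end

theory Submission
  imports Defs
begin

lemma ipf_lin:
  assumes "inner_product_form g"
  shows "linear (g a)" "linear (\<lambda>x. g x b)" "g u v = g v u" "v \<noteq> 0 \<Longrightarrow> g v v > 0"
  using assms unfolding inner_product_form_def bilinear_def by auto

lemma ipf_ops:
  assumes "inner_product_form g"
  shows "g (x + y) b = g x b + g y b" "g (c *\<^sub>R x) b = c * g x b"
    "g b (x + y) = g b x + g b y" "g b (c *\<^sub>R x) = c * g b x"
    "g (x - y) b = g x b - g y b" "g b (x - y) = g b x - g b y" "g 0 b = 0" "g b 0 = 0"
  using linear_add[OF ipf_lin(2)[OF assms, of b]] linear_scale[OF ipf_lin(2)[OF assms, of b]]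
    linear_add[OF ipf_lin(1)[OF assms, of b]] linear_scale[OF ipf_lin(1)[OF assms, of b]]
    linear_diff[OF ipf_lin(2)[OF assms, of b]] linear_diff[OF ipf_lin(1)[OF assms, of b]]
    linear_0[OF ipf_lin(2)[OF assms, of b]] linear_0[OF ipf_lin(1)[OF assms, of b]]
  by auto

lemma ipf_zero:
  assumes "inner_product_form g" "g v v = 0" shows "v = 0"
  using ipf_lin(4)[OF assms(1), of v] assms(2) by auto

lemma ipf_unique:
  fixes g :: "'a::real_vector \<Rightarrow> 'a \<Rightarrow> real"
  assumes g: "inner_product_form g" and H: "subspace H" and a: "a \<in> H" and b: "b \<in> H"
    and eq: "\<forall>v\<in>H. g a v = g b v"
  shows "a = b"
proof -
  have "a - b \<in> H" using H a b by (simp add: subspace_diff)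
  hence "g a (a - b) = g b (a - b)" using eq by blast
  hence "g (a - b) (a - b) = 0" using ipf_ops[OF g] by simp
  thus ?thesis using ipf_zero[OF g, of "a - b"] by simp
qed

lemma riesz_sub:
  fixes g :: "'a::euclidean_space \<Rightarrow> 'a \<Rightarrow> real"
  assumes g: "inner_product_form g" and H: "subspace H" and l: "linear l"
  shows "\<exists>a\<in>H. \<forall>v\<in>H. g a v = l v"
proof -
  obtain B where B: "B \<subseteq> H" "independent B" "H \<subseteq> span B"
    by (metis basis_exists)
  have fin: "finite B" using B(2) by (simp add: finiteI_independent)
  have spB: "span B = H" using B H by (simp add: span_subspace)
  define psi where "psi a = (\<Sum>b\<in>B. g a b *\<^sub>R b)" for a
  have lpsi: "linear psi" unfolding psi_def
    by (rule linearI) (simp_all add: ipf_ops[OF g] scaleR_add_left sum.distrib scaleR_sum_right)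
  have coef: "\<forall>b\<in>B. u b = 0" if "(\<Sum>b\<in>B. u b *\<^sub>R b) = 0" for u
    using dependent_finite[OF fin] B(2) that by auto
  have ext: "\<forall>v\<in>H. g a v = k v" if "\<forall>b\<in>B. g a b = k b" "linear k" for a k
  proof -
    have "subspace {v. g a v = k v}"
      unfolding subspace_def using ipf_ops[OF g] linear_add[OF that(2)]
        linear_scale[OF that(2)] linear_0[OF that(2)]
      by simp
    hence "span B \<subseteq> {v. g a v = k v}" using that by (intro span_minimal) auto
    thus ?thesis using spB by auto
  qed
  have psiH: "psi ` H \<subseteq> H" unfolding psi_def using H B(1)
    by (auto intro!: subspace_sum subspace_scale)
  have inj: "inj_on psi H"
  proof (subst linear_inj_on_iff_eq_0[OF lpsi H], intro ballI impI)
    fix a assume a: "a \<in> H" "psi a = 0"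
    have "\<forall>b\<in>B. g a b = 0" using coef[of "g a"] a(2) unfolding psi_def by simp
    hence "\<forall>v\<in>H. g a v = (\<lambda>_. 0) v" using ext[of a "\<lambda>_. 0"] by (simp add: linear_zero)
    hence "g a a = 0" using a by simp
    thus "a = 0" using ipf_zero[OF g] by simp
  qed
  have spH: "span H = H" using H by (simp add: span_eq_iff)
  have "dim (psi ` H) = dim H"
    by (rule dim_image_eq[OF lpsi]) (simp add: spH inj)
  hence surj: "psi ` H = H"
    using subspace_dim_equal[OF linear_subspace_image[OF lpsi H] H psiH] by simp
  have "(\<Sum>b\<in>B. l b *\<^sub>R b) \<in> H" using H B(1) by (auto intro!: subspace_sum subspace_scale)
  then obtain a where a: "a \<in> H" "psi a = (\<Sum>b\<in>B. l b *\<^sub>R b)" using surj by force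
  have "(\<Sum>b\<in>B. (g a b - l b) *\<^sub>R b) = 0"
    using a(2) unfolding psi_def by (simp add: scaleR_diff_left sum_subtractf)
  hence "\<forall>b\<in>B. g a b = l b" using coef[of "\<lambda>b. g a b - l b"] by simp
  thus ?thesis using ext[OF _ l] a(1) by blast
qed

lemma P_char:
  fixes g :: "'a::euclidean_space \<Rightarrow> 'a \<Rightarrow> real" and h :: "'b::euclidean_space \<Rightarrow> 'b \<Rightarrow> real"
  assumes g: "inner_product_form g" and h: "inner_product_form h" and T: "linear T"
    and H: "direct_sum_decomp H (ker T)"
  shows "P_H g h T H u \<in> H \<and> (\<forall>v\<in>H. g (P_H g h T H u) v = h (T u) (T v))"
proof -
  have sH: "subspace H" using H unfolding direct_sum_decomp_def by simp
  have proj: "(THE X1. X1 \<in> range T \<and> (\<forall>w\<in>range T. h (T u - X1) w = 0)) = T u"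
  proof (rule the_equality)
    show "T u \<in> range T \<and> (\<forall>w\<in>range T. h (T u - T u) w = 0)" using ipf_ops[OF h] by simp
  next
    fix X1 assume X1: "X1 \<in> range T \<and> (\<forall>w\<in>range T. h (T u - X1) w = 0)"
    then obtain z where z: "X1 = T z" by auto
    have "T u - X1 = T (u - z)" using z linear_diff[OF T] by simp
    hence "T u - X1 \<in> range T" by simp
    hence "h (T u - X1) (T u - X1) = 0" using X1 by blast
    thus "X1 = T u" using ipf_zero[OF h, of "T u - X1"] by simp
  qed
  have lin: "linear (\<lambda>v. h (T u) (T v))"
    using linear_compose[OF T ipf_lin(1)[OF h, of "T u"]] by (simp add: o_def)
  obtain a where a: "a \<in> H" "\<forall>v\<in>H. g a v = h (T u) (T v)"
    using riesz_sub[OF g sH lin] by blast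
  have ex1: "\<exists>!a. a \<in> H \<and> (\<forall>v\<in>H. g a v = h (T u) (T v))"
  proof (rule ex1I[of _ a])
    show "a \<in> H \<and> (\<forall>v\<in>H. g a v = h (T u) (T v))" using a by blast
  next
    fix b assume "b \<in> H \<and> (\<forall>v\<in>H. g b v = h (T u) (T v))"
    thus "b = a" using ipf_unique[OF g sH, of b a] a by auto
  qed
  have "P_H g h T H u = (THE a. a \<in> H \<and> (\<forall>v\<in>H. g a v = h (T u) (T v)))"
    unfolding P_H_def diamond_def restr_adjoint_def comp_def proj ..
  thus ?thesis using theI'[OF ex1] by simp
qed

lemma dsd_swap: "direct_sum_decomp A B \<Longrightarrow> direct_sum_decomp B A"
  unfolding direct_sum_decomp_def
proof (elim conjE, intro conjI)
  assume e: "{a + b |a b. a \<in> A \<and> b \<in> B} = UNIV"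
  show "{a + b |a b. a \<in> B \<and> b \<in> A} = UNIV"
  proof (rule set_eqI)
    fix x
    have "x \<in> {a + b |a b. a \<in> A \<and> b \<in> B}" using e by simp
    then obtain a b where "a \<in> A" "b \<in> B" "x = a + b" by blast
    thus "x \<in> {a + b |a b. a \<in> B \<and> b \<in> A} \<longleftrightarrow> x \<in> UNIV"
      using add.commute by blast
  qed
qed auto

theorem mainTheorem3:
  fixes smooth :: "('m \<Rightarrow> real) \<Rightarrow> bool"
    and M :: "'m set"
    and gM :: "'m \<Rightarrow> 'a::euclidean_space \<Rightarrow> 'a \<Rightarrow> real"
    and gN :: "'n \<Rightarrow> 'b::euclidean_space \<Rightarrow> 'b \<Rightarrow> real"
    and f :: "'m \<Rightarrow> 'n"
    and df :: "'m \<Rightarrow> 'a \<Rightarrow> 'b"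
  assumes gM_ip: "\<And>x. x \<in> M \<Longrightarrow> inner_product_form (gM x)"
    and gN_ip: "\<And>y. inner_product_form (gN y)"
    and df_lin: "\<And>x. x \<in> M \<Longrightarrow> linear (df x)"
  shows "conformal_riemannian_morphism smooth M gM gN f df \<longleftrightarrow>
    (\<exists>\<Lambda>. smooth \<Lambda> \<and> (\<forall>x\<in>M. \<Lambda> x > 0) \<and>
       (\<forall>x\<in>M. \<exists>H. direct_sum_decomp H (ker (df x)) \<and>
          P_H (gM x) (gN (f x)) (df x) H \<circ> P_H (gM x) (gN (f x)) (df x) H
            = (\<lambda>v. \<Lambda> x *\<^sub>R P_H (gM x) (gN (f x)) (df x) H v)))"
proof
  assume "conformal_riemannian_morphism smooth M gM gN f df"
  then obtain L where L: "smooth L" "\<forall>x\<in>M. L x > 0"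
    "\<forall>x\<in>M. geometric_function (gM x) (gN (f x)) (df x) (L x)"
    unfolding conformal_riemannian_morphism_def by blast
  have "\<exists>H. direct_sum_decomp H (ker (df x)) \<and>
          P_H (gM x) (gN (f x)) (df x) H \<circ> P_H (gM x) (gN (f x)) (df x) H
            = (\<lambda>v. L x *\<^sub>R P_H (gM x) (gN (f x)) (df x) H v)" if x: "x \<in> M" for x
  proof -
    let ?g = "gM x" and ?h = "gN (f x)" and ?T = "df x" and ?r = "L x"
    obtain C where C: "direct_sum_decomp (ker ?T) C" "\<forall>u\<in>C. \<forall>v\<in>C. ?h (?T u) (?T v) = ?r * ?g u v"
      using L(3) x unfolding geometric_function_def by blast
    have C': "direct_sum_decomp C (ker ?T)" using dsd_swap[OF C(1)] .
    have sC: "subspace C" using C' unfolding direct_sum_decomp_def by simp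
    note ch = P_char[OF gM_ip[OF x] gN_ip[of "f x"] df_lin[OF x] C']
    have PC: "P_H ?g ?h ?T C w = ?r *\<^sub>R w" if w: "w \<in> C" for w
    proof (rule ipf_unique[OF gM_ip[OF x] sC])
      show "P_H ?g ?h ?T C w \<in> C" using ch by blast
      show "?r *\<^sub>R w \<in> C" using sC w by (simp add: subspace_scale)
      show "\<forall>v\<in>C. ?g (P_H ?g ?h ?T C w) v = ?g (?r *\<^sub>R w) v"
        using ch[of w] C(2) w ipf_ops[OF gM_ip[OF x]] by auto
    qed
    show ?thesis
    proof (intro exI conjI)
      show "direct_sum_decomp C (ker ?T)" by fact
      show "P_H ?g ?h ?T C \<circ> P_H ?g ?h ?T C = (\<lambda>v. ?r *\<^sub>R P_H ?g ?h ?T C v)"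
        using PC ch by (auto simp: fun_eq_iff)
    qed
  qed
  thus "\<exists>\<Lambda>. smooth \<Lambda> \<and> (\<forall>x\<in>M. \<Lambda> x > 0) \<and>
       (\<forall>x\<in>M. \<exists>H. direct_sum_decomp H (ker (df x)) \<and>
          P_H (gM x) (gN (f x)) (df x) H \<circ> P_H (gM x) (gN (f x)) (df x) H
            = (\<lambda>v. \<Lambda> x *\<^sub>R P_H (gM x) (gN (f x)) (df x) H v))"
    using L by blast
next
  assume "\<exists>\<Lambda>. smooth \<Lambda> \<and> (\<forall>x\<in>M. \<Lambda> x > 0) \<and>
       (\<forall>x\<in>M. \<exists>H. direct_sum_decomp H (ker (df x)) \<and>
          P_H (gM x) (gN (f x)) (df x) H \<circ> P_H (gM x) (gN (f x)) (df x) H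
            = (\<lambda>v. \<Lambda> x *\<^sub>R P_H (gM x) (gN (f x)) (df x) H v))"
  then obtain L where L: "smooth L" "\<forall>x\<in>M. L x > 0"
    "\<forall>x\<in>M. \<exists>H. direct_sum_decomp H (ker (df x)) \<and>
          P_H (gM x) (gN (f x)) (df x) H \<circ> P_H (gM x) (gN (f x)) (df x) H
            = (\<lambda>v. L x *\<^sub>R P_H (gM x) (gN (f x)) (df x) H v)" by blast
  have "geometric_function (gM x) (gN (f x)) (df x) (L x)" if x: "x \<in> M" for x
  proof -
    let ?g = "gM x" and ?h = "gN (f x)" and ?T = "df x" and ?r = "L x"
    note g = gM_ip[OF x] and h = gN_ip[of "f x"] and T = df_lin[OF x]
    obtain H where H: "direct_sum_decomp H (ker ?T)"
      "P_H ?g ?h ?T H \<circ> P_H ?g ?h ?T H = (\<lambda>v. ?r *\<^sub>R P_H ?g ?h ?T H v)"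
      using L(3) x by blast
    let ?P = "P_H ?g ?h ?T H"
    have sH: "subspace H" and HK: "H \<inter> ker ?T = {0}" using H(1) unfolding direct_sum_decomp_def by auto
    note ch = P_char[OF g h T H(1)]
    have PP: "?P (?P u) = ?r *\<^sub>R ?P u" for u using fun_cong[OF H(2), of u] by simp
    have PH: "?P u = ?r *\<^sub>R u" if u: "u \<in> H" for u
    proof -
      define w where "w = ?P u - ?r *\<^sub>R u"
      have wH: "w \<in> H" unfolding w_def using ch[of u] u sH by (simp add: subspace_diff subspace_scale)
      have Tw: "?T w = ?T (?P u) - ?r *\<^sub>R ?T u" unfolding w_def
        using linear_diff[OF T] linear_scale[OF T] by simp
      have hz: "?h (?T w) z = ?h (?T (?P u)) z - ?r * ?h (?T u) z" for z
        unfolding Tw using ipf_ops[OF h] by simp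
      have "?h (?T w) (?T w) = ?h (?T (?P u)) (?T w) - ?r * ?h (?T u) (?T w)"
        by (rule hz)
      also have "\<dots> = ?g (?P (?P u)) w - ?r * ?g (?P u) w"
        using ch[of "?P u"] ch[of u] wH by simp
      also have "\<dots> = 0" unfolding PP using ipf_ops[OF g] by simp
      finally have "?T w = 0" using ipf_zero[OF h] by simp
      hence "w \<in> H \<inter> ker ?T" using wH by (simp add: ker_def)
      hence "w = 0" using HK by simp
      thus ?thesis unfolding w_def by simp
    qed
    show ?thesis unfolding geometric_function_def
    proof (intro conjI exI)
      show "linear ?T" by fact
      show "?r > 0" using L(2) x by blast
      show "direct_sum_decomp (ker ?T) H" using dsd_swap[OF H(1)] .
      show "\<forall>u\<in>H. \<forall>v\<in>H. ?h (?T u) (?T v) = ?r * ?g u v"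
        using ch PH ipf_ops[OF g] by (metis)
    qed
  qed
  thus "conformal_riemannian_morphism smooth M gM gN f df"
    unfolding conformal_riemannian_morphism_def using L by blast
qed

end
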